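(* Let $d,e\in\mathbb{N}$ and set $n=2$, $m=d+2$. Assume that the Padé matrix $P_T$ of $\mathcal{T}^2_{d,e,d+2}$ is square, i.e. $\binom{e+2}{2}=\binom{d+4}{2}-\binom{d+2}{2}=2d+5$. Let $f=\det(P_T)\in\mathbb{C}[c_\gamma : 0\le|\gamma|\le d+2]$. If $\mathcal{T}^2_{d,e,d+2}=V(f)$ and $\mathcal{T}^2_{d,e,d+2}$ is a non-defective hypersurface of $\mathbb{P}^N$, $N=\binom{d+4}{2}-1$, then the Hessian of $f$ vanishes identically: $h_f=\det\left(\frac{\partial^2 f}{\partial c_\gamma\,\partial c_\delta}\right)_{0\le|\gamma|,|\delta|\le d+2}\equiv 0$.
   Context: Notation: $x=(x_1,\dots,x_n)$, multi-indices $\gamma\in\mathbb{N}^n$, $x^\gamma=x_1^{\gamma_1}\cdots x_n^{\gamma_n}$, $|\gamma|=\gamma_1+\dots+\gamma_n$. Taylor variety: for $P,Q\in\mathbb{C}[x]$ with $P(0)=Q(0)=1$, $\deg P\le d$, $\deg Q\le e$, write the Taylor expansion at the origin $P/Q=1+\sum_{0<|\gamma|\le m}c_\gamma x^\gamma+(\text{terms of order}\ge m+1)$. This defines a map $\psi:\mathbb{C}^{\binom{d+n}{n}-1}\times\mathbb{C}^{\binom{e+n}{n}-1}\to\mathbb{C}^{\binom{n+m}{n}-1}$, $(P,Q)\mapsto(c_\gamma)_{0<|\gamma|\le m}$. The Taylor variety $\mathcal{T}^n_{d,e,m}$ is the projective closure of the image of $\psi$ in $\mathbb{P}^N$, $N=\binom{n+m}{n}-1$,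 with homogeneous coordinates $[c_\gamma]_{0\le|\gamma|\le m}$ (it is irreducible). Its expected dimension is $\min\{\binom{d+n}{n}+\binom{e+n}{n}-2,\binom{m+n}{n}-1\}$; it is non-defective if its dimension equals the expected dimension. Padé matrix: for the generic polynomial $T=\sum_{0\le|\gamma|\le m}c_\gamma x^\gamma$, let $\varphi_T:\mathbb{C}[x]_{\le e}\to\operatorname{Span}\{x^\rho: d+1\le|\rho|\le m\}$ send $Q$ to the part of $QT$ supported on monomials of degree between $d+1$ and $m$. The Padé matrix $P_T$ is the matrix of $\varphi_T$ in monomial bases (columns indexed by monomials $x^\sigma$, $|\sigma|\le e$, rows by monomials $x^\rho$, $d+1\le|\rho|\le m$); its $(\rho,\sigma)$ entry is $c_{\rho-\sigma}$ if $\sigma\le\rho$ componentwise and $0$ otherwise. It has size $\left(\binom{m+n}{n}-\binom{d+n}{n}\right)\times\binom{e+n}{n}$, with entries linear forms in the $c_\gamma$. *)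

theory Defs
  imports "HOL-Analysis.Derivative" "Jordan_Normal_Form.Determinant"
begin

text \<open>A point of C^{Gamma} (coordinates c_gamma) is a
  function nat*nat => complex which vanishes outside the index set Gamma.\<close>

type_synonym mon = "nat \<times> nat"
type_synonym pt = "mon \<Rightarrow> complex"

definition mdeg :: "mon \<Rightarrow> nat" where
  "mdeg g = fst g + snd g"

definition mle :: "mon \<Rightarrow> mon \<Rightarrow> bool" where
  "mle s r \<longleftrightarrow> fst s \<le> fst r \<and> snd s \<le> snd r"

definition msub :: "mon \<Rightarrow> mon \<Rightarrow> mon" where
  "msub r s = (fst r - fst s, snd r - snd s)"

text \<open>Monomials of exact degree k, and of degree in [a, b], as explicit lists
  (fixing an ordering of the monomial bases).\<close>
definition mons_deg :: "nat \<Rightarrow> mon list" where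
  "mons_deg k = map (\<lambda>i. (i, k - i)) [0..<Suc k]"

definition mons_between :: "nat \<Rightarrow> nat \<Rightarrow> mon list" where
  "mons_between a b = concat (map mons_deg [a..<Suc b])"

definition mons_upto :: "nat \<Rightarrow> mon set" where
  "mons_upto m = {g. mdeg g \<le> m}"

definition ext_pts :: "mon set \<Rightarrow> pt set" where
  "ext_pts G = {x. \<forall>g. g \<notin> G \<longrightarrow> x g = 0}"

inductive_set polyfun :: "mon set \<Rightarrow> (pt \<Rightarrow> complex) set" for G where
  pconst: "(\<lambda>x. a) \<in> polyfun G"
| pvar: "g \<in> G \<Longrightarrow> (\<lambda>x. x g) \<in> polyfun G"
| padd: "p \<in> polyfun G \<Longrightarrow> q \<in> polyfun G \<Longrightarrow> (\<lambda>x. p x + q x) \<in> polyfun G"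
| pmult: "p \<in> polyfun G \<Longrightarrow> q \<in> polyfun G \<Longrightarrow> (\<lambda>x. p x * q x) \<in> polyfun G"

definition zariski_closed :: "mon set \<Rightarrow> pt set \<Rightarrow> bool" where
  "zariski_closed G X \<longleftrightarrow>
     (\<exists>P \<subseteq> polyfun G. X = {x \<in> ext_pts G. \<forall>p\<in>P. p x = 0})"

definition zariski_closure :: "mon set \<Rightarrow> pt set \<Rightarrow> pt set" where
  "zariski_closure G S =
     {x \<in> ext_pts G. \<forall>p \<in> polyfun G. (\<forall>y\<in>S. p y = 0) \<longrightarrow> p x = 0}"

definition zariski_irreducible :: "mon set \<Rightarrow> pt set \<Rightarrow> bool" where
  "zariski_irreducible G X \<longleftrightarrow> zariski_closed G X \<and> X \<noteq> {} \<and>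
     (\<forall>Y Z. zariski_closed G Y \<longrightarrow> zariski_closed G Z \<longrightarrow> X \<subseteq> Y \<union> Z \<longrightarrow> X \<subseteq> Y \<or> X \<subseteq> Z)"

definition krull_dim :: "mon set \<Rightarrow> pt set \<Rightarrow> nat" where
  "krull_dim G X = Sup {k. \<exists>Z :: nat \<Rightarrow> pt set.
      (\<forall>i\<le>k. zariski_irreducible G (Z i) \<and> Z i \<subseteq> X) \<and> (\<forall>i<k. Z i \<subset> Z (Suc i))}"

text \<open>Image of the Taylor map psi, embedded in the affine chart c_0 = 1 of P^N.
  p, q are the coefficient vectors of P, Q (deg P <= d, deg Q <= e, P(0)=Q(0)=1);
  c are the Taylor coefficients of P/Q up to order m, characterised by
  Q * (P/Q) = P up to order m, i.e. sum_{sigma <= gamma} q_sigma c_{gamma - sigma} = p_gamma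
  for |gamma| <= m (this determines c uniquely since q_0 = 1; c_0 = 1).\<close>
definition taylor_image :: "nat \<Rightarrow> nat \<Rightarrow> nat \<Rightarrow> pt set" where
  "taylor_image d e m = {c \<in> ext_pts (mons_upto m). \<exists>p q :: pt.
      p (0,0) = 1 \<and> q (0,0) = 1 \<and>
      (\<forall>g. d < mdeg g \<longrightarrow> p g = 0) \<and> (\<forall>g. e < mdeg g \<longrightarrow> q g = 0) \<and>
      (\<forall>g. mdeg g \<le> m \<longrightarrow>
         (\<Sum>s\<in>{s. mle s g}. q s * c (msub g s)) = p g)}"

text \<open>Affine cone over the Taylor variety T^2_{d,e,m} in C^{N+1}: the Zariski closure
  of the cone over the image of psi. Projective closure in P^N corresponds to this cone
  (a point [c] lies in T iff c lies in this cone).\<close>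
definition taylor_cone :: "nat \<Rightarrow> nat \<Rightarrow> nat \<Rightarrow> pt set" where
  "taylor_cone d e m = zariski_closure (mons_upto m)
      {(\<lambda>g. t * c g) | t c. c \<in> taylor_image d e m}"

text \<open>Dimension of the projective variety T = (dimension of its affine cone) - 1.\<close>
definition taylor_dim :: "nat \<Rightarrow> nat \<Rightarrow> nat \<Rightarrow> nat" where
  "taylor_dim d e m = krull_dim (mons_upto m) (taylor_cone d e m) - 1"

definition expected_dim :: "nat \<Rightarrow> nat \<Rightarrow> nat \<Rightarrow> nat \<Rightarrow> nat" where
  "expected_dim n d e m = min ((d + n choose n) + (e + n choose n) - 2) ((m + n choose n) - 1)"

definition pade_matrix :: "nat \<Rightarrow> nat \<Rightarrow> nat \<Rightarrow> pt \<Rightarrow> complex mat" where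
  "pade_matrix d e m c =
     (let R = mons_between (Suc d) m; C = mons_between 0 e in
      mat (length R) (length C)
        (\<lambda>(i, j). if mle (C ! j) (R ! i) then c (msub (R ! i) (C ! j)) else 0))"

definition pade_det :: "nat \<Rightarrow> nat \<Rightarrow> nat \<Rightarrow> pt \<Rightarrow> complex" where
  "pade_det d e m c = det (pade_matrix d e m c)"

definition pderiv_coord :: "mon \<Rightarrow> (pt \<Rightarrow> complex) \<Rightarrow> pt \<Rightarrow> complex" where
  "pderiv_coord g F c = deriv (\<lambda>t. F (c(g := t))) (c g)"

definition hessian_det :: "nat \<Rightarrow> (pt \<Rightarrow> complex) \<Rightarrow> pt \<Rightarrow> complex" where
  "hessian_det m F c =
     (let V = mons_between 0 m in
      det (mat (length V) (length V)
        (\<lambda>(i, j). pderiv_coord (V ! i) (pderiv_coord (V ! j) F) c)))"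

end

theory Submission
  imports Defs
begin

lemma det_row0_zero:
  fixes A :: "complex mat"
  assumes "dim_row A = n" "dim_col A = n" "0 < n" "\<And>j. j < n \<Longrightarrow> A $$ (0, j) = 0"
  shows "det A = 0"
proof -
  have h: "(\<Prod>i = 0 ..< n. A $$ (i, p i)) = 0" if p: "p permutes {0..<n}" for p
  proof -
    have "0 \<in> {0..<n}" "A $$ (0, p 0) = 0"
      using assms p by (auto simp: permutes_in_image)
    thus ?thesis by (metis finite_atLeastLessThan prod_zero)
  qed
  have "det A = (\<Sum>p\<in>{p. p permutes {0..<n}}. signof p * (\<Prod>i = 0 ..< n. A $$ (i, p i)))"
    unfolding det_def using assms by simp
  also have "\<dots> = 0" using h by (intro sum.neutral) auto
  finally show ?thesis .
qed

lemma choose2: "(n::nat) choose 2 = n * (n - 1) div 2"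
  by (simp add: choose_two)

lemma e_le_d:
  fixes d e :: nat
  assumes "(e + 2 choose 2) = (d + 4 choose 2) - (d + 2 choose 2)"
  shows "e \<le> d"
proof (rule ccontr)
  assume "\<not> e \<le> d"
  hence ed: "d + 1 \<le> e" by simp
  have eq: "(e + 2) * (e + 1) = 4 * d + 10"
  proof -
    have a: "(e + 2 choose 2) * 2 = (e+2)*(e+1)" by (simp add: choose_two)
    have b: "(d + 4 choose 2) * 2 = (d+4)*(d+3)" by (simp add: choose_two)
    have c: "(d + 2 choose 2) * 2 = (d+2)*(d+1)" by (simp add: choose_two)
    have "(d+4)*(d+3) = (d+2)*(d+1) + (4*d+10)" by (simp add: algebra_simps)
    then show ?thesis using assms a b c by (simp add: algebra_simps diff_mult_distrib)
  qed
  have "(d + 3) * (d + 2) \<le> (e + 2) * (e + 1)" using ed by (intro mult_mono) auto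
  hence "d * d + d \<le> 4" using eq by (simp add: algebra_simps)
  hence "d \<le> 1"
  proof -
    assume h: "d * d + d \<le> 4"
    show "d \<le> 1"
    proof (rule ccontr)
      assume "\<not> d \<le> 1"
      hence "2 * 2 \<le> d * d" by (intro mult_mono) auto
      thus False using h \<open>\<not> d \<le> 1\<close> by linarith
    qed
  qed
  moreover have "e \<le> 3"
  proof (rule ccontr)
    assume "\<not> e \<le> 3"
    hence "5 * 4 \<le> (e + 2) * (e + 1)" by (intro mult_mono) auto
    thus False using eq \<open>d \<le> 1\<close> by simp
  qed
  ultimately show False using eq by (auto simp: le_Suc_eq numeral_3_eq_3 numeral_2_eq_2 le_less_Suc_eq)
qed


lemma mons_between_deg:
  assumes "g \<in> set (mons_between a b)"
  shows "a \<le> mdeg g \<and> mdeg g \<le> b"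
  using assms by (auto simp: mons_between_def mons_deg_def mdeg_def)

lemma pade_inv:
  fixes d e :: nat
  assumes "e \<le> d"
  shows "pade_det d e (d + 2) (c((0,0) := t)) = pade_det d e (d + 2) c"
proof -
  define R where "R = mons_between (Suc d) (d + 2)"
  define C where "C = mons_between 0 e"
  have ne: "msub (R ! i) (C ! j) \<noteq> (0,0)" if "i < length R" "j < length C" "mle (C ! j) (R ! i)" for i j
  proof
    assume h: "msub (R ! i) (C ! j) = (0,0)"
    have "R ! i \<in> set R" "C ! j \<in> set C" using that by auto
    hence "Suc d \<le> mdeg (R ! i)" "mdeg (C ! j) \<le> e"
      using mons_between_deg unfolding R_def C_def by blast+
    moreover have "R ! i = C ! j" using h that(3)
      by (auto simp: msub_def mle_def prod_eq_iff)
    ultimately show False using assms by simp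
  qed
  show ?thesis
    unfolding pade_det_def pade_matrix_def Let_def R_def[symmetric] C_def[symmetric]
    by (rule arg_cong[where f = det], rule eq_matI) (use ne in auto)
qed

definition inv0 :: "(pt \<Rightarrow> complex) \<Rightarrow> bool" where
  "inv0 F \<longleftrightarrow> (\<forall>x t. F (x((0,0) := t)) = F x)"

lemma inv0_deriv0:
  assumes "inv0 F"
  shows "pderiv_coord (0,0) F c = 0"
proof -
  have "(\<lambda>s. F (c((0,0) := s))) = (\<lambda>s. F c)" using assms by (auto simp: inv0_def)
  thus ?thesis unfolding pderiv_coord_def by simp
qed

lemma inv0_pderiv:
  assumes "inv0 F"
  shows "inv0 (pderiv_coord g F)"
  unfolding inv0_def
proof (intro allI)
  fix x :: pt and t
  show "pderiv_coord g F (x((0,0) := t)) = pderiv_coord g F x"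
  proof (cases "g = (0,0)")
    case True
    then show ?thesis using inv0_deriv0[OF assms] by simp
  next
    case False
    have "(\<lambda>s. F ((x((0,0) := t))(g := s))) = (\<lambda>s. F (x(g := s)))"
    proof
      fix s
      have "(x((0,0) := t))(g := s) = (x(g := s))((0,0) := t)" using False by (auto simp: fun_eq_iff)
      thus "F ((x((0,0) := t))(g := s)) = F (x(g := s))" using assms by (simp add: inv0_def)
    qed
    moreover have "(x((0,0) := t)) g = x g" using False by simp
    ultimately show ?thesis unfolding pderiv_coord_def by simp
  qed
qed

theorem theorem1p1:
  fixes d e :: nat
  assumes square: "(e + 2 choose 2) = (d + 4 choose 2) - (d + 2 choose 2)"
    and TVf: "taylor_cone d e (d + 2) =
              {x \<in> ext_pts (mons_upto (d + 2)). pade_det d e (d + 2) x = 0}"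
    and nondefective: "taylor_dim d e (d + 2) = expected_dim 2 d e (d + 2)"
    and hypersurface: "taylor_dim d e (d + 2) = (d + 4 choose 2) - 1 - 1"
  shows "\<forall>c. hessian_det (d + 2) (pade_det d e (d + 2)) c = 0"
proof
  fix c
  have ed: "e \<le> d" using e_le_d[OF square] .
  have I: "inv0 (pade_det d e (d + 2))" unfolding inv0_def using pade_inv[OF ed] by blast
  define V where "V = mons_between 0 (d + 2)"
  have V0: "V ! 0 = (0,0)" and Vl: "0 < length V"
  proof -
    have u: "[0..<Suc (d + 2)] = 0 # [1..<Suc (d + 2)]" by (simp add: upt_rec)
    have u1: "[0..<Suc 0] = [0::nat]" by simp
    show "V ! 0 = (0,0)" "0 < length V"
      unfolding V_def mons_between_def u by (simp_all add: mons_deg_def u1 del: upt_Suc)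
  qed
  show "hessian_det (d + 2) (pade_det d e (d + 2)) c = 0"
    unfolding hessian_det_def Let_def V_def[symmetric]
    by (rule det_row0_zero[where n = "length V"]) (use Vl V0 inv0_deriv0[OF inv0_pderiv[OF I]] in auto)
qed

end
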